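(* Let $n\geq 6$ and $a\geq 2$ be integers with $n\equiv a \pmod 2$, and let $k=\frac{n-a-2}{2}\geq 1$. Let $K_{2,a}\bullet F_k$ be the graph obtained by identifying a vertex of $K_{2,a}$ belonging to the part of size $a$ with the vertex of $F_k$ that is adjacent to every other vertex of $F_k$, and let $K_{2,a}* F_k$ be the graph obtained by identifying a vertex of $K_{2,a}$ belonging to the part of size $2$ with the vertex of $F_k$ that is adjacent to every other vertex of $F_k$. Then $$\rho(K_{2,a}\bullet F_{k})< \sqrt{2n-4}\quad\text{and}\quad \rho(K_{2,a} * F_{k})< \sqrt{2n-4}.$$
   Context: All graphs are simple and undirected. $K_{2,a}$ is the complete bipartite graph with parts of sizes $2$ and $a$. The friendship graph $F_k$ is the graph consisting of $k$ edge-disjoint triangles that all share a single common vertex (the vertex adjacent to all others). $\rho(G)$ denotes the spectral radius (largest adjacency eigenvalue) of $G$. *)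

theory Defs
  imports Complex_Main "Jordan_Normal_Form.Char_Poly"
begin

text \<open>Simple graphs on the vertex set {0..<N} given by a symmetric irreflexive
  edge predicate on nat.\<close>

definition adj_matrix :: "nat \<Rightarrow> (nat \<Rightarrow> nat \<Rightarrow> bool) \<Rightarrow> real mat" where
  "adj_matrix N E = mat N N (\<lambda>(i,j). if E i j then 1 else 0)"

definition graph_rho :: "nat \<Rightarrow> (nat \<Rightarrow> nat \<Rightarrow> bool) \<Rightarrow> real" where
  "graph_rho N E = Max {x. eigenvalue (adj_matrix N E) x}"

text \<open>K_{2,a}: part of size 2 is {0,1}, part of size a is {2..<a+2}.\<close>
definition K2a_edge :: "nat \<Rightarrow> nat \<Rightarrow> nat \<Rightarrow> bool" where
  "K2a_edge a u v \<longleftrightarrow>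
     (u < 2 \<and> 2 \<le> v \<and> v < a + 2) \<or> (v < 2 \<and> 2 \<le> u \<and> u < a + 2)"

text \<open>Friendship graph F_k with center c and the 2k non-center vertices
  {a+2..<a+2+2k}; the triangles are {c, a+2+2i, a+3+2i} for i < k.\<close>
definition Fk_edge :: "nat \<Rightarrow> nat \<Rightarrow> nat \<Rightarrow> nat \<Rightarrow> nat \<Rightarrow> bool" where
  "Fk_edge c a k u v \<longleftrightarrow>
     (let R = {a+2..<a+2+2*k} in
       (u \<in> R \<and> v \<in> R \<and> u \<noteq> v \<and> (u - (a+2)) div 2 = (v - (a+2)) div 2)
       \<or> (u = c \<and> v \<in> R) \<or> (v = c \<and> u \<in> R))"

text \<open>K_{2,a} \<bullet> F_k: center of F_k identified with vertex 2 (part of size a).\<close>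
definition bullet_edge :: "nat \<Rightarrow> nat \<Rightarrow> nat \<Rightarrow> nat \<Rightarrow> bool" where
  "bullet_edge a k u v \<longleftrightarrow> K2a_edge a u v \<or> Fk_edge 2 a k u v"

text \<open>K_{2,a} * F_k: center of F_k identified with vertex 0 (part of size 2).\<close>
definition star_edge :: "nat \<Rightarrow> nat \<Rightarrow> nat \<Rightarrow> nat \<Rightarrow> bool" where
  "star_edge a k u v \<longleftrightarrow> K2a_edge a u v \<or> Fk_edge 0 a k u v"

end

theory Submission
  imports Defs
begin

lemma adj_carrier: "adj_matrix n E \<in> carrier_mat n n"
  by (simp add: adj_matrix_def)

lemma adj_row:
  assumes "v \<in> carrier_vec n" "i < n"
  shows "(adj_matrix n E *\<^sub>v v) $ i = (\<Sum>j\<in>{j. j<n \<and> E i j}. v $ j)"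
proof -
  have "(adj_matrix n E *\<^sub>v v) $ i = (\<Sum>j\<in>{0..<n}. (if E i j then 1 else 0) * v $ j)"
    using assms by (simp add: adj_matrix_def scalar_prod_def)
  also have "\<dots> = (\<Sum>j\<in>{0..<n}. if E i j then v $ j else 0)"
    by (rule sum.cong) auto
  also have "\<dots> = (\<Sum>j\<in>{j. j<n \<and> E i j}. v $ j)"
    by (rule sum.mono_neutral_cong_right) auto
  finally show ?thesis .
qed

lemma eig_bound:
  fixes E :: "nat \<Rightarrow> nat \<Rightarrow> bool" and w s :: "nat \<Rightarrow> real"
  assumes wpos: "\<forall>i<n. w i > 0"
    and ws: "\<forall>j<n. (\<Sum>l\<in>{l. l<n \<and> E j l}. w l) \<le> s j"
    and sC: "\<forall>i<n. (\<Sum>j\<in>{j. j<n \<and> E i j}. s j) < C * w i"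
    and ev: "eigenvalue (adj_matrix n E) x"
  shows "x^2 < C"
proof -
  obtain v where v: "v \<in> carrier_vec n" "v \<noteq> 0\<^sub>v n" "adj_matrix n E *\<^sub>v v = x \<cdot>\<^sub>v v"
    using ev unfolding eigenvalue_def eigenvector_def by (auto simp: adj_matrix_def)
  have key: "x * v $ i = (\<Sum>j\<in>{j. j<n \<and> E i j}. v $ j)" if "i < n" for i
  proof -
    have "(x \<cdot>\<^sub>v v) $ i = x * v $ i" using v(1) that by simp
    then show ?thesis using adj_row[OF v(1) that, of E] v(3) by simp
  qed
  obtain j0 where j0: "j0 < n" "v $ j0 \<noteq> 0"
    using v(1,2) by (metis carrier_vecD eq_vecI index_zero_vec(1) index_zero_vec(2))
  define m where "m i = \<bar>v $ i\<bar> / w i" for i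
  have fin: "finite (m ` {..<n})" "m ` {..<n} \<noteq> {}" using j0 by auto
  obtain i0 where i0: "i0 < n" "m i0 = Max (m ` {..<n})"
    using Max_in[OF fin] by auto
  define M where "M = m i0"
  have mle: "m j \<le> M" if "j < n" for j
    unfolding M_def i0(2) using fin that by auto
  have vle: "\<bar>v $ j\<bar> \<le> M * w j" if "j < n" for j
    using mle[OF that] wpos that by (simp add: m_def divide_le_eq)
  have "m j0 > 0" using j0 wpos by (simp add: m_def)
  hence Mpos: "M > 0" using mle[OF j0(1)] by linarith
  have "w i0 > 0" using wpos i0(1) by auto
  hence vi0: "\<bar>v $ i0\<bar> = M * w i0" by (simp add: M_def m_def)
  have step1: "\<bar>x * v $ j\<bar> \<le> M * s j" if "j < n" for j
  proof -
    have "\<bar>x * v $ j\<bar> = \<bar>\<Sum>l\<in>{l. l<n \<and> E j l}. v $ l\<bar>" using key[OF that] by simp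
    also have "\<dots> \<le> (\<Sum>l\<in>{l. l<n \<and> E j l}. \<bar>v $ l\<bar>)" by (rule sum_abs)
    also have "\<dots> \<le> (\<Sum>l\<in>{l. l<n \<and> E j l}. M * w l)" by (rule sum_mono) (auto intro: vle)
    also have "\<dots> = M * (\<Sum>l\<in>{l. l<n \<and> E j l}. w l)" by (simp add: sum_distrib_left)
    also have "\<dots> \<le> M * s j" using ws that Mpos by auto
    finally show ?thesis .
  qed
  have "\<bar>x^2 * v $ i0\<bar> = \<bar>\<Sum>j\<in>{j. j<n \<and> E i0 j}. x * v $ j\<bar>"
    using key[OF i0(1)] by (simp add: power2_eq_square sum_distrib_left mult.assoc)
  also have "\<dots> \<le> (\<Sum>j\<in>{j. j<n \<and> E i0 j}. \<bar>x * v $ j\<bar>)" by (rule sum_abs)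
  also have "\<dots> \<le> (\<Sum>j\<in>{j. j<n \<and> E i0 j}. M * s j)" by (rule sum_mono) (auto intro: step1)
  also have "\<dots> = M * (\<Sum>j\<in>{j. j<n \<and> E i0 j}. s j)" by (simp add: sum_distrib_left)
  also have "\<dots> < M * (C * w i0)" using sC i0(1) Mpos by auto
  also have "\<dots> = C * \<bar>v $ i0\<bar>" using vi0 by simp
  finally have "x^2 * \<bar>v $ i0\<bar> < C * \<bar>v $ i0\<bar>" by (simp add: abs_mult)
  moreover have "\<bar>v $ i0\<bar> > 0" using vi0 Mpos wpos i0(1) by simp
  ultimately show ?thesis by simp
qed

lemma rho_bound:
  fixes E :: "nat \<Rightarrow> nat \<Rightarrow> bool"
  assumes ex: "eigenvalue (adj_matrix n E) y"
    and all: "\<And>x. eigenvalue (adj_matrix n E) x \<Longrightarrow> x^2 < C"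
  shows "graph_rho n E < sqrt C"
proof -
  let ?S = "{x. eigenvalue (adj_matrix n E) x}"
  have eq: "?S = {x. poly (char_poly (adj_matrix n E)) x = 0}"
    using eigenvalue_root_char_poly[OF adj_carrier] by blast
  have "char_poly (adj_matrix n E) \<noteq> 0"
    using degree_monic_char_poly[OF adj_carrier, of n E] by auto
  hence fin: "finite ?S" unfolding eq by (rule poly_roots_finite)
  have "graph_rho n E \<in> ?S" unfolding graph_rho_def using fin ex by (intro Max_in) auto
  hence "(graph_rho n E)^2 < C" using all by auto
  thus ?thesis by (rule real_less_rsqrt)
qed


lemma sum_const_on: "(\<And>i. i \<in> A \<Longrightarrow> f i = c) \<Longrightarrow> sum f A = of_nat (card A) * (c::real)"
  by (simp add: sum.cong[of A A f "\<lambda>_. c"])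

definition partner :: "nat \<Rightarrow> nat \<Rightarrow> nat" where
  "partner a u = (if even (u - (a+2)) then u+1 else u-1)"

lemma Tnb:
  assumes "a+2 \<le> u" "u < a+2+2*k"
  shows "{v. a+2 \<le> v \<and> v < a+2+2*k \<and> v \<noteq> u \<and> (v - (a+2)) div 2 = (u - (a+2)) div 2} = {partner a u}"
proof -
  obtain r where r: "u = a+2+r" "r < 2*k" using assms by (metis add_less_cancel_left le_Suc_ex)
  show ?thesis
    using r unfolding partner_def by (auto simp: le_iff_add; presburger)
qed

lemma partner_range: "a+2 \<le> u \<Longrightarrow> u < a+2+2*k \<Longrightarrow> a+2 \<le> partner a u \<and> partner a u < a+2+2*k"
  unfolding partner_def by auto presburger+


lemma nbB0: "u < 2 \<Longrightarrow> {v. v < a+2+2*k \<and> bullet_edge a k u v} = {2..<a+2}"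
  unfolding bullet_edge_def K2a_edge_def Fk_edge_def Let_def by auto

lemma nbB2: "a \<ge> 1 \<Longrightarrow> {v. v < a+2+2*k \<and> bullet_edge a k 2 v} = {0,1} \<union> {a+2..<a+2+2*k}"
  unfolding bullet_edge_def K2a_edge_def Fk_edge_def Let_def by auto

lemma nbBQ: "3 \<le> u \<Longrightarrow> u < a+2 \<Longrightarrow> {v. v < a+2+2*k \<and> bullet_edge a k u v} = {0,1}"
  unfolding bullet_edge_def K2a_edge_def Fk_edge_def Let_def by auto

lemma nbBT: assumes "a \<ge> 1" "a+2 \<le> u" "u < a+2+2*k"
  shows "{v. v < a+2+2*k \<and> bullet_edge a k u v} = {2, partner a u}"
proof -
  have "{v. v < a+2+2*k \<and> bullet_edge a k u v} = insert 2
     {v. a+2 \<le> v \<and> v < a+2+2*k \<and> v \<noteq> u \<and> (v - (a+2)) div 2 = (u - (a+2)) div 2}"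
    using assms unfolding bullet_edge_def K2a_edge_def Fk_edge_def Let_def by auto
  then show ?thesis using Tnb[OF assms(2,3)] by simp
qed

lemma nbS0: "{v. v < a+2+2*k \<and> star_edge a k 0 v} = {2..<a+2+2*k}"
  unfolding star_edge_def K2a_edge_def Fk_edge_def Let_def by auto

lemma nbS1: "{v. v < a+2+2*k \<and> star_edge a k 1 v} = {2..<a+2}"
  unfolding star_edge_def K2a_edge_def Fk_edge_def Let_def by auto

lemma nbSQ: "2 \<le> u \<Longrightarrow> u < a+2 \<Longrightarrow> {v. v < a+2+2*k \<and> star_edge a k u v} = {0,1}"
  unfolding star_edge_def K2a_edge_def Fk_edge_def Let_def by auto

lemma nbST: assumes "a+2 \<le> u" "u < a+2+2*k"
  shows "{v. v < a+2+2*k \<and> star_edge a k u v} = {0, partner a u}"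
proof -
  have "{v. v < a+2+2*k \<and> star_edge a k u v} = insert 0
     {v. a+2 \<le> v \<and> v < a+2+2*k \<and> v \<noteq> u \<and> (v - (a+2)) div 2 = (u - (a+2)) div 2}"
    using assms unfolding star_edge_def K2a_edge_def Fk_edge_def Let_def by auto
  then show ?thesis using Tnb[OF assms] by simp
qed


lemma eig_from_vec:
  fixes f :: "nat \<Rightarrow> real"
  assumes "\<forall>i<n. (\<Sum>j\<in>{j. j<n \<and> E i j}. f j) = x * f i" "r < n" "f r \<noteq> 0"
  shows "eigenvalue (adj_matrix n E) x"
proof -
  let ?v = "vec n f"
  have c: "?v \<in> carrier_vec n" by simp
  have "?v \<noteq> 0\<^sub>v n" using assms(2,3) by (metis index_vec index_zero_vec(1))
  moreover have "adj_matrix n E *\<^sub>v ?v = x \<cdot>\<^sub>v ?v"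
  proof (rule eq_vecI)
    fix i assume "i < dim_vec (x \<cdot>\<^sub>v ?v)"
    hence i: "i < n" by simp
    have "(adj_matrix n E *\<^sub>v ?v) $ i = (\<Sum>j\<in>{j. j<n \<and> E i j}. ?v $ j)" by (rule adj_row[OF c i])
    also have "\<dots> = (\<Sum>j\<in>{j. j<n \<and> E i j}. f j)" by (rule sum.cong) auto
    finally show "(adj_matrix n E *\<^sub>v ?v) $ i = (x \<cdot>\<^sub>v ?v) $ i" using assms(1) i by simp
  qed (auto simp: adj_matrix_def)
  ultimately show ?thesis unfolding eigenvalue_def eigenvector_def
    using c by (intro exI[of _ ?v]) (auto simp: adj_matrix_def)
qed

lemma partner_facts:
  "partner a (a+2) = a+3" "partner a (a+3) = a+2"
  "a+4 \<le> u \<Longrightarrow> a+4 \<le> partner a u"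
  "a+2 \<le> u \<Longrightarrow> partner a u \<noteq> u"
  unfolding partner_def by (auto; presburger)+

definition fm :: "nat \<Rightarrow> nat \<Rightarrow> real" where
  "fm a i = (if i = a+2 then 1 else if i = a+3 then -1 else 0)"

lemma fm_T: "k \<ge> 1 \<Longrightarrow> (\<Sum>j\<in>{a+2..<a+2+2*k}. fm a j) = 0"
proof -
  assume k: "k \<ge> 1"
  have "(\<Sum>j\<in>{a+2..<a+2+2*k}. fm a j) = (\<Sum>j\<in>{a+2,a+3}. fm a j)"
    using k by (intro sum.mono_neutral_right) (auto simp: fm_def)
  also have "\<dots> = 0" by (simp add: fm_def)
  finally show ?thesis .
qed

lemma fm_partner: "a+2 \<le> u \<Longrightarrow> fm a (partner a u) = - fm a u"
proof -
  assume u: "a+2 \<le> u"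
  consider "u = a+2" | "u = a+3" | "a+4 \<le> u" using u by linarith
  then show ?thesis
  proof cases
    case 3 then show ?thesis using partner_facts(3)[OF 3] by (simp add: fm_def)
  next
    case 1 then show ?thesis using partner_facts(1)[of a] by (simp add: fm_def)
  next
    case 2 then show ?thesis using partner_facts(2)[of a] by (simp add: fm_def)
  qed
qed


lemma sum_Q: "(a::nat) \<ge> 2 \<Longrightarrow> (\<Sum>j\<in>{2..<a+2}. f j) = f 2 + (\<Sum>j\<in>{3..<a+2}. f j)"
  by (subst sum.atLeast_Suc_lessThan) (auto simp: numeral_3_eq_3)

lemma sum_01T: "(a::nat) \<ge> 1 \<Longrightarrow> (\<Sum>j\<in>{0,1} \<union> {a+2..<a+2+2*k}. f j) = f 0 + f 1 + (\<Sum>j\<in>{a+2..<a+2+2*k}. f j)"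
  by (subst sum.union_disjoint) auto

lemma partner_ge: "a+2 \<le> u \<Longrightarrow> a+2 \<le> partner a u"
  unfolding partner_def by (auto; presburger)

lemma sum_pair: "a+2 \<le> u \<Longrightarrow> c < a+2 \<Longrightarrow> (\<Sum>j\<in>{c, partner a u}. f j) = f c + f (partner a u)"
  using partner_ge[of a u] by auto

lemma bullet_bound:
  assumes a: "a \<ge> 2" and k: "k \<ge> 1"
  shows "graph_rho (a+2+2*k) (bullet_edge a k) < sqrt (2 * real a + 4 * real k)"
proof -
  have a1: "a \<ge> 1" using a by simp
  have two_lt: "2 < a+2" using a by simp
  show ?thesis
proof (rule rho_bound)
  let ?N = "a+2+2*k"
  show "eigenvalue (adj_matrix ?N (bullet_edge a k)) (-1)"
  proof (rule eig_from_vec[where f = "fm a" and r = "a+2"])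
    show "\<forall>i<?N. (\<Sum>j\<in>{j. j<?N \<and> bullet_edge a k i j}. fm a j) = -1 * fm a i"
    proof (intro allI impI)
      fix i assume i: "i < ?N"
      consider "i < 2" | "i = 2" | "3 \<le> i" "i < a+2" | "a+2 \<le> i" by linarith
      then show "(\<Sum>j\<in>{j. j<?N \<and> bullet_edge a k i j}. fm a j) = -1 * fm a i"
      proof cases
        case 1 then show ?thesis unfolding nbB0[OF 1] by (auto simp: fm_def)
      next
        case 2
        have "(\<Sum>j\<in>{0,1} \<union> {a+2..<a+2+2*k}. fm a j) = fm a 0 + fm a 1 + (\<Sum>j\<in>{a+2..<a+2+2*k}. fm a j)"
          by (rule sum_01T[OF a1])
        moreover have "(\<Sum>j\<in>{a+2..<a+2+2*k}. fm a j) = 0" by (rule fm_T[OF k])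
        ultimately have "(\<Sum>j\<in>{0,1} \<union> {a+2..<a+2+2*k}. fm a j) = fm a 0 + fm a 1" by simp
        then show ?thesis unfolding 2 nbB2[OF a1] using a by (simp add: fm_def)
      next
        case 3 then show ?thesis unfolding nbBQ[OF 3] by (simp add: fm_def)
      next
        case 4 then show ?thesis using a i
          unfolding nbBT[OF a1 4 i] by (simp add: sum_pair fm_partner) (simp add: fm_def)
      qed
    qed
  qed (use k in \<open>auto simp: fm_def\<close>)
next
  fix x assume ev: "eigenvalue (adj_matrix (a+2+2*k) (bullet_edge a k)) x"
  let ?N = "a+2+2*k"
  define w :: "nat \<Rightarrow> real" where "w i = (if i = 2 then 3 else 2)" for i
  define s :: "nat \<Rightarrow> real" where "s i = (if i < 2 then 2 * real a + 1 else if i = 2 then 4 + 4 * real k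
      else if i < a+2 then 4 else 5)" for i
  have cQ: "real (card {3..<a+2}) = real a - 1" using a by simp
  have cT: "real (card {a+2..<a+2+2*k}) = 2 * real k" by simp
  show "x^2 < 2 * real a + 4 * real k"
  proof (rule eig_bound[OF _ _ _ ev, where w = w and s = s])
    show "\<forall>i<?N. 0 < w i" by (simp add: w_def)
    show "\<forall>j<?N. (\<Sum>l\<in>{l. l<?N \<and> bullet_edge a k j l}. w l) \<le> s j"
    proof (intro allI impI)
      fix i assume i: "i < ?N"
      consider "i < 2" | "i = 2" | "3 \<le> i" "i < a+2" | "a+2 \<le> i" by linarith
      then show "(\<Sum>l\<in>{l. l<?N \<and> bullet_edge a k i l}. w l) \<le> s i"
      proof cases
        case 1
        have "(\<Sum>j\<in>{3..<a+2}. w j) = (real a - 1) * 2"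
          by (subst sum_const_on[where c = 2]) (use a in \<open>auto simp: w_def of_nat_diff\<close>)
        then show ?thesis using 1 a unfolding nbB0[OF 1] sum_Q[OF a] by (simp add: w_def s_def)
      next
        case 2
        have "(\<Sum>j\<in>{a+2..<a+2+2*k}. w j) = 2 * real k * 2"
          by (subst sum_const_on[where c = 2]) (use a in \<open>auto simp: w_def cT\<close>)
        then show ?thesis using 2 a unfolding 2 nbB2[OF a1] sum_01T[OF a1] by (simp add: w_def s_def)
      next
        case 3 then show ?thesis unfolding nbBQ[OF 3] by (simp add: s_def w_def)
      next
        case 4 then show ?thesis using a i partner_range[of a i k]
          unfolding nbBT[OF a1 4 i] sum_pair[OF 4 two_lt] by (simp add: w_def s_def)
      qed
    qed
    show "\<forall>i<?N. (\<Sum>l\<in>{l. l<?N \<and> bullet_edge a k i l}. s l) < (2 * real a + 4 * real k) * w i"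
    proof (intro allI impI)
      fix i assume i: "i < ?N"
      consider "i < 2" | "i = 2" | "3 \<le> i" "i < a+2" | "a+2 \<le> i" by linarith
      then show "(\<Sum>l\<in>{l. l<?N \<and> bullet_edge a k i l}. s l) < (2 * real a + 4 * real k) * w i"
      proof cases
        case 1
        have "(\<Sum>j\<in>{3..<a+2}. s j) = (real a - 1) * 4"
          by (subst sum_const_on[where c = 4]) (use a in \<open>auto simp: s_def of_nat_diff\<close>)
        then show ?thesis using 1 a k unfolding nbB0[OF 1] sum_Q[OF a] by (simp add: w_def s_def)
      next
        case 2
        have "(\<Sum>j\<in>{a+2..<a+2+2*k}. s j) = 2 * real k * 5"
          by (subst sum_const_on[where c = 5]) (use a in \<open>auto simp: s_def cT\<close>)
        then show ?thesis using 2 a k unfolding 2 nbB2[OF a1] sum_01T[OF a1] by (simp add: w_def s_def)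
      next
        case 3 then show ?thesis using k unfolding nbBQ[OF 3] by (simp add: s_def w_def)
      next
        case 4 then show ?thesis using a k i partner_range[of a i k]
          unfolding nbBT[OF a1 4 i] sum_pair[OF 4 two_lt] by (simp add: w_def s_def)
      qed
    qed
  qed
qed
qed


lemma sum_split2: "(a::nat) \<ge> 2 \<Longrightarrow> (\<Sum>j\<in>{2..<a+2+2*k}. f j) = (\<Sum>j\<in>{2..<a+2}. f j) + (\<Sum>j\<in>{a+2..<a+2+2*k}. f j)"
  by (subst sum.atLeastLessThan_concat[symmetric, of 2 "a+2"]) auto

lemma star_bound:
  assumes a: "a \<ge> 2" and k: "k \<ge> 1"
  shows "graph_rho (a+2+2*k) (star_edge a k) < sqrt (2 * real a + 4 * real k)"
proof -
  have a1: "a \<ge> 1" using a by simp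
  have z: "0 < a+2" by simp
  have Q0: "(\<Sum>j\<in>{2..<a+2}. fm a j) = 0" by (rule sum.neutral) (auto simp: fm_def)
  have T0: "(\<Sum>j\<in>{a+2..<a+2+2*k}. fm a j) = 0" by (rule fm_T[OF k])
  show ?thesis
proof (rule rho_bound)
  let ?N = "a+2+2*k"
  show "eigenvalue (adj_matrix ?N (star_edge a k)) (-1)"
  proof (rule eig_from_vec[where f = "fm a" and r = "a+2"])
    show "\<forall>i<?N. (\<Sum>j\<in>{j. j<?N \<and> star_edge a k i j}. fm a j) = -1 * fm a i"
    proof (intro allI impI)
      fix i assume i: "i < ?N"
      consider "i = 0" | "i = 1" | "2 \<le> i" "i < a+2" | "a+2 \<le> i" by linarith
      then show "(\<Sum>j\<in>{j. j<?N \<and> star_edge a k i j}. fm a j) = -1 * fm a i"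
      proof cases
        case 1 then show ?thesis unfolding 1 nbS0 sum_split2[OF a] Q0 T0 by (simp add: fm_def)
      next
        case 2 then show ?thesis unfolding 2 nbS1 Q0 by (simp add: fm_def)
      next
        case 3 then show ?thesis unfolding nbSQ[OF 3] by (simp add: fm_def)
      next
        case 4 then show ?thesis using a i
          unfolding nbST[OF 4 i] sum_pair[OF 4 z] by (simp add: fm_partner) (simp add: fm_def)
      qed
    qed
  qed (use k in \<open>auto simp: fm_def\<close>)
next
  fix x assume ev: "eigenvalue (adj_matrix (a+2+2*k) (star_edge a k)) x"
  let ?N = "a+2+2*k"
  define w :: "nat \<Rightarrow> real" where "w i = (if i < 2 then 3 else 2)" for i
  define s :: "nat \<Rightarrow> real" where "s i = (if i = 0 then 2 * real a + 4 * real k else if i = 1 then 2 * real a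
      else if i < a+2 then 6 else 5)" for i
  have wA: "(\<Sum>j\<in>{2..<a+2+2*k}. w j) = (real a + 2 * real k) * 2"
    by (subst sum_const_on[where c = 2]) (auto simp: w_def)
  have wQ: "(\<Sum>j\<in>{2..<a+2}. w j) = real a * 2"
    by (subst sum_const_on[where c = 2]) (auto simp: w_def)
  have sQ: "(\<Sum>j\<in>{2..<a+2}. s j) = real a * 6"
    by (subst sum_const_on[where c = 6]) (auto simp: s_def)
  have sT: "(\<Sum>j\<in>{a+2..<a+2+2*k}. s j) = 2 * real k * 5"
    by (subst sum_const_on[where c = 5]) (auto simp: s_def)
  show "x^2 < 2 * real a + 4 * real k"
  proof (rule eig_bound[OF _ _ _ ev, where w = w and s = s])
    show "\<forall>i<?N. 0 < w i" by (simp add: w_def)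
    show "\<forall>j<?N. (\<Sum>l\<in>{l. l<?N \<and> star_edge a k j l}. w l) \<le> s j"
    proof (intro allI impI)
      fix i assume i: "i < ?N"
      consider "i = 0" | "i = 1" | "2 \<le> i" "i < a+2" | "a+2 \<le> i" by linarith
      then show "(\<Sum>l\<in>{l. l<?N \<and> star_edge a k i l}. w l) \<le> s i"
      proof cases
        case 1 then show ?thesis unfolding 1 nbS0 wA by (simp add: s_def)
      next
        case 2 then show ?thesis unfolding 2 nbS1 wQ by (simp add: s_def)
      next
        case 3 then show ?thesis unfolding nbSQ[OF 3] by (simp add: s_def w_def)
      next
        case 4 then show ?thesis using a i partner_range[of a i k]
          unfolding nbST[OF 4 i] sum_pair[OF 4 z] by (simp add: w_def s_def)
      qed
    qed
    show "\<forall>i<?N. (\<Sum>l\<in>{l. l<?N \<and> star_edge a k i l}. s l) < (2 * real a + 4 * real k) * w i"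
    proof (intro allI impI)
      fix i assume i: "i < ?N"
      consider "i = 0" | "i = 1" | "2 \<le> i" "i < a+2" | "a+2 \<le> i" by linarith
      then show "(\<Sum>l\<in>{l. l<?N \<and> star_edge a k i l}. s l) < (2 * real a + 4 * real k) * w i"
      proof cases
        case 1 then show ?thesis using a k unfolding 1 nbS0 sum_split2[OF a] sQ sT by (simp add: w_def)
      next
        case 2 then show ?thesis using a k unfolding 2 nbS1 sQ by (simp add: w_def)
      next
        case 3 then show ?thesis using a k unfolding nbSQ[OF 3] by (simp add: s_def w_def)
      next
        case 4 then show ?thesis using a k i partner_range[of a i k]
          unfolding nbST[OF 4 i] sum_pair[OF 4 z] by (simp add: w_def s_def)
      qed
    qed
  qed
qed
qed

theorem lemma2p6:
  fixes n a k :: nat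
  assumes "n \<ge> 6" and "a \<ge> 2" and "n mod 2 = a mod 2"
    and "2 * k = n - a - 2" and "k \<ge> 1"
  shows "graph_rho n (bullet_edge a k) < sqrt (2 * real n - 4)
       \<and> graph_rho n (star_edge a k) < sqrt (2 * real n - 4)"
proof -
  have n: "n = a+2+2*k" using assms by linarith
  have c: "2 * real n - 4 = 2 * real a + 4 * real k" unfolding n by simp
  show ?thesis unfolding c using bullet_bound[OF assms(2,5)] star_bound[OF assms(2,5)]
    unfolding n by simp
qed

end
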